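(* Let $01234$ be a convex pentagon inscribed in a circle, with vertices in cyclic order. Let the side lengths be $$a_0=|23|,\quad a_1=|34|,\quad a_2=|40|,\quad a_3=|01|,\quad a_4=|12|,$$ so that $a_i$ is the length of the side opposite vertex $i$. Let $d_0=|14|$ be the diagonal disjoint from the side $23$. Then $$\left(d_0^2-a_2^2-a_3^2\right)^2(a_0d_0+a_1a_4)(a_1d_0+a_0a_4)(a_4d_0+a_0a_1)=(a_2a_3)^2\left[d_0^3-(a_0^2+a_1^2+a_4^2)d_0-2a_0a_1a_4\right]^2.$$ Equivalently, $X=d_0$ is a root of $$(X^2-q)^2(PX^3+SX^2+PQX+P^2)=p^2(X^3-QX-2P)^2,$$ where $p=a_2a_3$, $P=a_0a_1a_4$, $q=a_2^2+a_3^2$, $Q=a_0^2+a_1^2+a_4^2$, and $S=(a_0a_1)^2+(a_0a_4)^2+(a_1a_4)^2$.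
   Context: $|ij|$ denotes the distance between vertices $i$ and $j$. *)

theory Defs
  imports "HOL-Analysis.Analysis"
begin

text \<open>Distinct points on a circle taken in their cyclic
order always form a convex polygon, and every convex cyclic pentagon listed in cyclic order
arises this way (possibly after reflection, which does not change the distances).\<close>

definition convex_cyclic_pentagon :: "(nat \<Rightarrow> complex) \<Rightarrow> bool" where
  "convex_cyclic_pentagon v \<longleftrightarrow>
     (\<exists>c r \<theta>. r > 0 \<and>
        (\<forall>i<5. v i = c + of_real r * cis (\<theta> i)) \<and>
        \<theta> 0 < \<theta> 1 \<and> \<theta> 1 < \<theta> 2 \<and> \<theta> 2 < \<theta> 3 \<and> \<theta> 3 < \<theta> 4 \<and>
        \<theta> 4 < \<theta> 0 + 2 * pi)"

end

theory Submission imports Defs begin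

lemma chord_sq: "(cmod (cis a - cis b))^2 = (2 * sin ((b-a)/2))^2"
proof -
  have "(cmod (cis a - cis b))^2 = (cos a - cos b)^2 + (sin a - sin b)^2"
    by (simp add: cmod_power2 cis.sel)
  also have "\<dots> = 2 - 2 * cos (b - a)"
    by (simp add: cos_diff power2_eq_square algebra_simps)
  also have "cos (b - a) = cos (2 * ((b-a)/2))" by (rule arg_cong[where f=cos]) simp
  also have "\<dots> = 1 - 2 * (sin ((b-a)/2))^2" by (rule cos_double_sin)
  finally show ?thesis by (simp add: power2_eq_square)
qed

lemma chord:
  assumes "r > 0" "0 < b - a" "b - a < 2*pi"
  shows "dist (c + complex_of_real r * cis a) (c + complex_of_real r * cis b) = 2 * r * sin ((b-a)/2)"
proof -
  have sp: "sin ((b-a)/2) > 0" using assms by (intro sin_gt_zero) auto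
  have "dist (c + complex_of_real r * cis a) (c + complex_of_real r * cis b) = r * cmod (cis a - cis b)"
    using assms by (simp add: dist_norm norm_mult right_diff_distrib[symmetric])
  also have "cmod (cis a - cis b) = 2 * sin ((b-a)/2)"
    using chord_sq[of a b] sp by (metis norm_ge_zero power2_eq_iff_nonneg mult_pos_pos zero_less_numeral less_imp_le)
  finally show ?thesis by simp
qed

lemma trig_main: fixes x y z :: real
  shows "sin (x+y+z)^3 - (sin x^2+sin y^2+sin z^2) * sin (x+y+z) - 2 * sin x * sin y * sin z
     = 2 * cos (x+y+z) * sin (x+y) * sin (y+z) * sin (z+x)"
proof -
  have a: "sin x^2 + cos x^2 = 1" "sin y^2 + cos y^2 = 1" "sin z^2 + cos z^2 = 1" by simp_all
  show ?thesis unfolding sin_add cos_add using a by algebra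
qed

lemma trig_tri: fixes s t :: real
  shows "sin s^2 - sin (s+t)^2 - sin t^2 = -2 * sin (s+t) * sin t * cos s"
proof -
  have a: "sin s^2 + cos s^2 = 1" "sin t^2 + cos t^2 = 1" by simp_all
  show ?thesis unfolding sin_add cos_add using a by algebra
qed

lemma ptol: fixes a b c :: real
  shows "sin (a+b) * sin (b+c) = sin a * sin c + sin b * sin (a+b+c)"
proof -
  have a: "sin a^2 + cos a^2 = 1" "sin b^2 + cos b^2 = 1" "sin c^2 + cos c^2 = 1" by simp_all
  show ?thesis unfolding sin_add cos_add using a by algebra
qed
lemma combine:
  fixes k x y z t :: real
  defines "s \<equiv> x + y + z"
  assumes "a0 = k * sin x" "a1 = k * sin y" "a4 = k * sin z" "d0 = k * sin s"
     "a2 = k * sin (s+t)" "a3 = k * sin t"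
  shows "(d0^2 - a2^2 - a3^2)^2 * (a0*d0 + a1*a4) * (a1*d0 + a0*a4) * (a4*d0 + a0*a1)
         = (a2*a3)^2 * (d0^3 - (a0^2 + a1^2 + a4^2)*d0 - 2*a0*a1*a4)^2"
proof -
  have D: "d0^2 - a2^2 - a3^2 = -2 * a2 * a3 * cos s"
  proof -
    have "d0^2 - a2^2 - a3^2 = k^2 * (sin s^2 - sin (s+t)^2 - sin t^2)"
      using assms by (simp add: power_mult_distrib algebra_simps)
    also have "\<dots> = k^2 * (-2 * sin (s+t) * sin t * cos s)" by (simp only: trig_tri)
    also have "\<dots> = -2 * a2 * a3 * cos s" using assms by (simp add: power2_eq_square algebra_simps)
    finally show ?thesis .
  qed
  have F1: "a0*d0 + a1*a4 = k^2 * (sin (z+x) * sin (x+y))"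
    using assms ptol[of z x y] by (simp add: algebra_simps power2_eq_square s_def)
  have F2: "a1*d0 + a0*a4 = k^2 * (sin (x+y) * sin (y+z))"
    using assms ptol[of x y z] by (simp add: algebra_simps power2_eq_square s_def)
  have F3: "a4*d0 + a0*a1 = k^2 * (sin (y+z) * sin (z+x))"
    using assms ptol[of y z x] by (simp add: algebra_simps power2_eq_square s_def)
  have R: "d0^3 - (a0^2 + a1^2 + a4^2)*d0 - 2*a0*a1*a4
     = k^3 * (2 * cos s * sin (x+y) * sin (y+z) * sin (z+x))"
  proof -
    have "d0^3 - (a0^2 + a1^2 + a4^2)*d0 - 2*a0*a1*a4 = k^3 * (sin s^3 - (sin x^2+sin y^2+sin z^2) * sin s - 2 * sin x * sin y * sin z)"
      using assms by (simp add: power_mult_distrib algebra_simps power2_eq_square power3_eq_cube)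
    then show ?thesis unfolding s_def trig_main .
  qed
  show ?thesis unfolding D F1 F2 F3 R
    by (simp add: power2_eq_square power3_eq_cube algebra_simps)
qed

theorem theorem4:
  fixes v :: "nat \<Rightarrow> complex"
  assumes "convex_cyclic_pentagon v"
  defines "a0 \<equiv> dist (v 2) (v 3)" and "a1 \<equiv> dist (v 3) (v 4)" and "a2 \<equiv> dist (v 4) (v 0)"
      and "a3 \<equiv> dist (v 0) (v 1)" and "a4 \<equiv> dist (v 1) (v 2)" and "d0 \<equiv> dist (v 1) (v 4)"
  shows "(d0^2 - a2^2 - a3^2)^2 * (a0*d0 + a1*a4) * (a1*d0 + a0*a4) * (a4*d0 + a0*a1)
         = (a2*a3)^2 * (d0^3 - (a0^2 + a1^2 + a4^2)*d0 - 2*a0*a1*a4)^2"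
proof -
  obtain c r \<theta> where r: "r > 0" and v: "\<And>i. i < 5 \<Longrightarrow> v i = c + of_real r * cis (\<theta> i)"
    and o: "\<theta> 0 < \<theta> 1" "\<theta> 1 < \<theta> 2" "\<theta> 2 < \<theta> 3" "\<theta> 3 < \<theta> 4" "\<theta> 4 < \<theta> 0 + 2 * pi"
    using assms(1) unfolding convex_cyclic_pentagon_def by blast
  have v1: "v 1 = c + of_real r * cis (\<theta> 1)" using v[of 1] by simp
  have v2: "v 2 = c + of_real r * cis (\<theta> 2)" using v[of 2] by simp
  have v3: "v 3 = c + of_real r * cis (\<theta> 3)" using v[of 3] by simp
  have v4: "v 4 = c + of_real r * cis (\<theta> 4)" using v[of 4] by simp
  have v00: "v 0 = c + of_real r * cis (\<theta> 0)" using v[of 0] by simp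
  have v0: "v 0 = c + of_real r * cis (\<theta> 0 + 2*pi)" proof -
    have "cis (\<theta> 0 + 2*pi) = cis (\<theta> 0)" by (simp add: complex_eq_iff)
    then show ?thesis using v[of 0] by simp
  qed
  have e0: "a0 = (2*r) * sin ((\<theta> 3 - \<theta> 2)/2)" unfolding a0_def v2 v3
    using r o by (intro chord) auto
  have e1: "a1 = (2*r) * sin ((\<theta> 4 - \<theta> 3)/2)" unfolding a1_def v4 v3
    using r o by (intro chord) auto
  have e4: "a4 = (2*r) * sin ((\<theta> 2 - \<theta> 1)/2)" unfolding a4_def v2 v1
    using r o by (intro chord) auto
  have e3: "a3 = (2*r) * sin ((\<theta> 1 - \<theta> 0)/2)" unfolding a3_def v00 v1
    using r o by (intro chord) auto
  have ed: "d0 = (2*r) * sin ((\<theta> 4 - \<theta> 1)/2)" unfolding d0_def v4 v1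
    using r o by (intro chord) auto
  have e2': "a2 = (2*r) * sin ((\<theta> 0 + 2*pi - \<theta> 4)/2)" unfolding a2_def v4 v0
    using r o by (intro chord) auto
  have "sin ((\<theta> 0 + 2*pi - \<theta> 4)/2) = sin (pi - (\<theta> 4 - \<theta> 0)/2)"
    by (rule arg_cong[where f=sin]) (simp add: field_simps)
  also have "\<dots> = sin ((\<theta> 4 - \<theta> 0)/2)" by (rule sin_pi_minus)
  finally have s2: "sin ((\<theta> 0 + 2*pi - \<theta> 4)/2) = sin ((\<theta> 4 - \<theta> 0)/2)" .
  have e2: "a2 = (2*r) * sin ((\<theta> 3 - \<theta> 2)/2 + (\<theta> 4 - \<theta> 3)/2 + (\<theta> 2 - \<theta> 1)/2 + (\<theta> 1 - \<theta> 0)/2)"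
  proof -
    have h: "(\<theta> 3 - \<theta> 2)/2 + (\<theta> 4 - \<theta> 3)/2 + (\<theta> 2 - \<theta> 1)/2 + (\<theta> 1 - \<theta> 0)/2 = (\<theta> 4 - \<theta> 0)/2"
      by (simp add: field_simps)
    show ?thesis unfolding h using e2' s2 by simp
  qed
  have ed': "d0 = (2*r) * sin ((\<theta> 3 - \<theta> 2)/2 + (\<theta> 4 - \<theta> 3)/2 + (\<theta> 2 - \<theta> 1)/2)"
  proof -
    have h: "(\<theta> 3 - \<theta> 2)/2 + (\<theta> 4 - \<theta> 3)/2 + (\<theta> 2 - \<theta> 1)/2 = (\<theta> 4 - \<theta> 1)/2"
      by (simp add: field_simps)
    show ?thesis unfolding h using ed by simp
  qed
  show ?thesis
    by (rule combine[OF e0 e1 e4 ed'[folded add.assoc] e2 e3])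
qed
end
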